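(* Let $\gamma>0$, $s>0$, $u\ge\gamma$ and $v\in\mathbb{R}$. Let $G(u,v;s)=(u^2+v^2)^{-s}$ and $D_1=\partial/\partial u$. Then for $j\ge1$, $$\frac{D_1^jG(u,v;s)}{G(u,v;s)}=\frac{P_j(u,v;s)}{(u^2+v^2)^j},$$ where $P_j$ are the polynomials defined by $P_1(u,v;s)=-2su$ and $P_{m+1}(u,v;s)=(u^2+v^2)\frac{\partial P_m}{\partial u}(u,v;s)-2(s+m)uP_m(u,v;s)$; and $$-\frac{2s}{\gamma}\le\frac{D_1G}{G}<0,\qquad -\frac{s}{4\gamma^2(s+1)}\le\frac{D_1^2G}{G}\le\frac{2s(2s+1)}{\gamma^2},$$ $$-\frac{2s(2s+1)(2s+2)}{\gamma^3}\le\frac{D_1^3G}{G}\le\frac{2s(2s+2)}{\gamma^3(s+2)^2},$$ $$-\frac{2s(s+1)(2s+2)\cdot3}{\gamma^4}\le\frac{D_1^4G}{G}\le\frac{2s(2s+1)(2s+2)(2s+3)}{\gamma^4},$$ where all quotients are evaluated at $(u,v;s)$. *)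

theory Defs
  imports "HOL-Analysis.Analysis"
begin

definition G :: "real \<Rightarrow> real \<Rightarrow> real \<Rightarrow> real" where
  "G u v s = (u\<^sup>2 + v\<^sup>2) powr (-s)"

text \<open>The polynomials P_j (j \<ge> 1); P 0 is an unused convention (P_0 = 1).
  P_{m+1} = (u^2+v^2) dP_m/du - 2 (s+m) u P_m.\<close>
fun P :: "nat \<Rightarrow> real \<Rightarrow> real \<Rightarrow> real \<Rightarrow> real" where
  "P 0 u v s = 1"
| "P (Suc 0) u v s = - 2 * s * u"
| "P (Suc (Suc m)) u v s =
     (u\<^sup>2 + v\<^sup>2) * deriv (\<lambda>x. P (Suc m) x v s) u - 2 * (s + real (Suc m)) * u * P (Suc m) u v s"

definition D1G :: "nat \<Rightarrow> real \<Rightarrow> real \<Rightarrow> real \<Rightarrow> real" where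
  "D1G j u v s = (deriv ^^ j) (\<lambda>x. G x v s) u"

end

theory Submission
  imports Defs "HOL-Computational_Algebra.Polynomial"
begin

lemma P_rec: "P (Suc j) x v s = (x\<^sup>2+v\<^sup>2) * deriv (\<lambda>x. P j x v s) x - 2*(s+real j)*x*P j x v s"
  by (cases j) auto

lemma P_poly: "\<exists>p. \<forall>x. P j x v s = poly p x"
proof (induction j)
  case 0
  then show ?case by (intro exI[of _ "[:1:]"]) simp
next
  case (Suc j)
  then obtain p where p: "\<And>x. P j x v s = poly p x" by blast
  have fe: "(\<lambda>x. P j x v s) = poly p" using p by auto
  have d: "deriv (\<lambda>x. P j x v s) x = poly (pderiv p) x" for x
    unfolding fe by (rule DERIV_imp_deriv) (rule poly_DERIV)
  show ?case
    by (intro exI[of _ "[:v\<^sup>2,0,1:] * pderiv p - smult (2*(s+real j)) ([:0,1:] * p)"])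
       (simp only: P_rec d, simp add: p power2_eq_square algebra_simps)
qed

lemma P_deriv: "DERIV (\<lambda>x. P j x v s) x :> deriv (\<lambda>x. P j x v s) x"
proof -
  obtain p where p: "\<And>x. P j x v s = poly p x" using P_poly by blast
  have fe: "(\<lambda>x. P j x v s) = poly p" using p by auto
  show ?thesis unfolding fe by (metis DERIV_imp_deriv poly_DERIV)
qed

lemma D_formula:
  "\<forall>x\<in>{x. x\<^sup>2+v\<^sup>2 > 0}. (deriv^^j) (\<lambda>x. G x v s) x = (x\<^sup>2+v\<^sup>2) powr (-s - real j) * P j x v s"
proof (induction j)
  case 0
  then show ?case by (simp add: G_def)
next
  case (Suc j)
  let ?S = "{x::real. x\<^sup>2+v\<^sup>2 > 0}"
  have op: "open ?S"
    by (rule open_Collect_less) (auto intro!: continuous_intros)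
  show ?case
  proof
    fix x assume x: "x \<in> ?S"
    hence r: "x\<^sup>2+v\<^sup>2 > 0" by simp
    have D: "DERIV (\<lambda>y. (y\<^sup>2+v\<^sup>2) powr (-s - real j) * P j y v s) x :>
       (-s - real j) * (x\<^sup>2+v\<^sup>2) powr (-s - real j - 1) * (2*x) * P j x v s
       + (x\<^sup>2+v\<^sup>2) powr (-s - real j) * deriv (\<lambda>x. P j x v s) x"
      apply (rule derivative_eq_intros DERIV_fun_powr P_deriv refl | use r in simp)+
      done
    have D2: "DERIV ((deriv^^j) (\<lambda>x. G x v s)) x :>
       (-s - real j) * (x\<^sup>2+v\<^sup>2) powr (-s - real j - 1) * (2*x) * P j x v s
       + (x\<^sup>2+v\<^sup>2) powr (-s - real j) * deriv (\<lambda>x. P j x v s) x"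
      by (rule has_field_derivative_transform_within_open[OF D op x]) (use Suc in auto)
    define R where "R = (x\<^sup>2+v\<^sup>2) powr (-s - real j - 1)"
    have e: "(x\<^sup>2+v\<^sup>2) powr (-s - real j) = (x\<^sup>2+v\<^sup>2) * R"
      using r by (simp add: powr_diff R_def)
    have e2: "(x\<^sup>2+v\<^sup>2) powr (-s - real (Suc j)) = R"
      by (simp add: R_def algebra_simps)
    have "(deriv^^Suc j) (\<lambda>x. G x v s) x = deriv ((deriv^^j) (\<lambda>x. G x v s)) x" by simp
    also have "\<dots> = (-s - real j) * R * (2*x) * P j x v s
       + (x\<^sup>2+v\<^sup>2) * R * deriv (\<lambda>x. P j x v s) x"
      using DERIV_imp_deriv[OF D2] unfolding e R_def by simp
    also have "\<dots> = R * P (Suc j) x v s"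
      unfolding P_rec by (simp add: algebra_simps)
    finally show "(deriv^^Suc j) (\<lambda>x. G x v s) x = (x\<^sup>2+v\<^sup>2) powr (-s - real (Suc j)) * P (Suc j) x v s"
      unfolding e2 by simp
  qed
qed


lemma dlin: "deriv (\<lambda>x. c * x) (x::real) = c"
  by (rule DERIV_imp_deriv) (auto intro!: derivative_eq_intros)

lemma P1: "P 1 x v s = - 2 * s * x" by simp

lemma P2: "P 2 x v s = (4 * s\<^sup>2+2 * s) * x\<^sup>2 - 2 * s * v\<^sup>2"
proof -
  have d: "deriv (\<lambda>x. P 1 x v s) x = -2 * s" using dlin[of "-2 * s"] by simp
  have n: "Suc 1 = 2" by simp
  have e: "P 2 x v s = (x\<^sup>2+v\<^sup>2) * deriv (\<lambda>x. P 1 x v s) x - 2*(s+real 1)*x*P 1 x v s"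
    using P_rec[of 1 x v s] by (simp only: n)
  show ?thesis by (simp only: e d, simp add: power2_eq_square algebra_simps)
qed

lemma P3: "P 3 x v s = -(2 * s * (2 * s+1) * (2 * s+2)) * x^3 + 12 * s * (s+1) * x * v\<^sup>2"
proof -
  have d: "deriv (\<lambda>x. P 2 x v s) x = 2 * (4 * s\<^sup>2+2 * s) * x"
    unfolding P2 by (rule DERIV_imp_deriv) (auto intro!: derivative_eq_intros)
  have n: "Suc 2 = 3" by simp
  have e: "P 3 x v s = (x\<^sup>2+v\<^sup>2) * deriv (\<lambda>x. P 2 x v s) x - 2*(s+real 2)*x*P 2 x v s"
    using P_rec[of 2 x v s] by (simp only: n)
  show ?thesis by (simp only: e d, simp add: P2 power2_eq_square power3_eq_cube algebra_simps)
qed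

lemma P4: "P 4 x v s = 2 * s * (2 * s+1) * (2 * s+2) * (2 * s+3) * x^4
   - 24 * s * (s+1) * (2 * s+3) * x\<^sup>2 * v\<^sup>2 + 12 * s * (s+1) * v^4"
proof -
  have d: "deriv (\<lambda>x. P 3 x v s) x = -3 * (2 * s * (2 * s+1) * (2 * s+2)) * x\<^sup>2 + 12 * s * (s+1) * v\<^sup>2"
    unfolding P3 by (rule DERIV_imp_deriv) (auto intro!: derivative_eq_intros simp: power2_eq_square)
  have n: "Suc 3 = 4" by simp
  have e: "P 4 x v s = (x\<^sup>2+v\<^sup>2) * deriv (\<lambda>x. P 3 x v s) x - 2*(s+real 3)*x*P 3 x v s"
    using P_rec[of 3 x v s] by (simp only: n)
  show ?thesis by (simp only: e d, simp add: P3 power2_eq_square power3_eq_cube power4_eq_xxxx algebra_simps)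
qed


lemma aux3: "(a::real) \<le> 1 \<Longrightarrow> 1 \<le> b \<Longrightarrow> 0 \<le> c \<Longrightarrow> 0 \<le> b + c - a" by linarith

lemma aux4: "(a::real) * 1 \<le> b \<Longrightarrow> c = 2 * b \<Longrightarrow> 0 \<le> a \<Longrightarrow> a \<le> c" by linarith

lemma i2lo: fixes s U Y :: real assumes "s > 0" "U > 0" "Y \<ge> 0"
  shows "- s / (4 * U * (s + 1)) \<le> ((4 * s\<^sup>2 + 2 * s) * U - 2 * s * Y) / (U + Y)\<^sup>2"
proof -
  have k: "0 \<le> s * (Y - (4 * s + 3) * U)\<^sup>2" using assms by simp
  have "4 * U * (s + 1) * ((4 * s\<^sup>2 + 2 * s) * U - 2 * s * Y) + s * (U + Y)\<^sup>2 = s * (Y - (4 * s + 3) * U)\<^sup>2"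
    by (simp add: power2_eq_square algebra_simps)
  hence "- s * (U + Y)\<^sup>2 \<le> ((4 * s\<^sup>2 + 2 * s) * U - 2 * s * Y) * (4 * U * (s + 1))" using k by (simp add: algebra_simps)
  thus ?thesis using assms by (simp add: divide_simps)
qed

lemma i2hi: fixes s U Y :: real assumes "s > 0" "U > 0" "Y \<ge> 0"
  shows "((4 * s\<^sup>2 + 2 * s) * U - 2 * s * Y) / (U + Y)\<^sup>2 \<le> (4 * s\<^sup>2 + 2 * s) / U"
proof -
  have a: "0 \<le> 4 * s\<^sup>2 + 2 * s" using assms by simp
  have "U * U \<le> (U + Y)\<^sup>2" using assms by (simp add: power2_eq_square mult_mono)
  hence "(4 * s\<^sup>2 + 2 * s) * (U * U) \<le> (4 * s\<^sup>2 + 2 * s) * (U + Y)\<^sup>2" using a by (rule mult_left_mono)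
  moreover have "((4 * s\<^sup>2 + 2 * s) * U - 2 * s * Y) * U \<le> (4 * s\<^sup>2 + 2 * s) * (U * U)"
    using assms by (simp add: algebra_simps)
  ultimately have "((4 * s\<^sup>2 + 2 * s) * U - 2 * s * Y) * U \<le> (4 * s\<^sup>2 + 2 * s) * (U + Y)\<^sup>2" by linarith
  thus ?thesis using assms by (simp add: divide_simps)
qed

lemma i3hi: fixes s U Y :: real assumes "s > 0" "U > 0" "Y \<ge> 0"
  shows "U\<^sup>2 * (12 * s * (s + 1) * Y - 2 * s * (2 * s + 1) * (2 * s + 2) * U) * (s + 2)\<^sup>2
      \<le> 2 * s * (2 * s + 2) * (U + Y) ^ 3"
proof -
  define W where "W = U + Y"
  define X where "X = (s + 2) * U"
  have "0 \<le> (W - X)\<^sup>2 * (W + 2 * X)" using assms by (simp add: W_def X_def)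
  hence "X\<^sup>2 * (3 * W - 2 * X) \<le> W ^ 3" by (simp add: power2_eq_square power3_eq_cube algebra_simps)
  hence "4 * s * (s + 1) * (X\<^sup>2 * (3 * W - 2 * X)) \<le> 4 * s * (s + 1) * W ^ 3"
    using assms by (intro mult_left_mono) auto
  thus ?thesis by (simp add: W_def X_def power2_eq_square power3_eq_cube algebra_simps)
qed

lemma i4hi: fixes s U Y :: real assumes "s > 0" "U > 0" "Y \<ge> 0"
  shows "(2 * s * (2 * s + 1) * (2 * s + 2) * (2 * s + 3) * U\<^sup>2 - 24 * s * (s + 1) * (2 * s + 3) * U * Y
     + 12 * s * (s + 1) * Y\<^sup>2) * U\<^sup>2 \<le> 2 * s * (2 * s + 1) * (2 * s + 2) * (2 * s + 3) * (U + Y) ^ 4"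
proof -
  define A where "A = 2 * s * (2 * s + 1) * (2 * s + 2) * (2 * s + 3)"
  have o: "1 \<le> (2 * s + 1) * (2 * s + 3)"
  proof -
    have "0 \<le> s * s" by simp
    thus ?thesis using assms by (simp add: algebra_simps)
  qed
  have A: "12 * s * (s + 1) \<le> 6 * A"
  proof -
    have "12 * s * (s + 1) * 1 \<le> 12 * s * (s + 1) * ((2 * s + 1) * (2 * s + 3))"
      using o assms by (intro mult_left_mono) auto
    moreover have "6 * A = 2 * (12 * s * (s + 1) * ((2 * s + 1) * (2 * s + 3)))"
      unfolding A_def by (simp add: algebra_simps)
    moreover have "0 \<le> 12 * s * (s + 1)" using assms by simp
    ultimately show ?thesis using aux4[of "12 * s * (s + 1)"] by simp
  qed
  have "0 \<le> 24 * s * (s + 1) * (2 * s + 3) * U * Y" using assms by simp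
  moreover have "(U + Y) ^ 4 = U^4 + 4 * U^3 * Y + 6 * U\<^sup>2 * Y\<^sup>2 + 4 * U * Y^3 + Y^4"
    by (simp add: power2_eq_square power3_eq_cube power4_eq_xxxx algebra_simps)
  moreover have "0 \<le> A * (4 * U^3 * Y + 4 * U * Y^3 + Y^4)" using assms by (simp add: A_def)
  moreover have "12 * s * (s + 1) * (Y\<^sup>2 * U\<^sup>2) \<le> 6 * A * (Y\<^sup>2 * U\<^sup>2)"
    using A by (intro mult_right_mono) auto
  moreover have "0 \<le> 24 * s * (s + 1) * (2 * s + 3) * U * Y * U\<^sup>2" using assms by simp
  ultimately show ?thesis unfolding A_def[symmetric]
    by (simp add: power2_eq_square power3_eq_cube power4_eq_xxxx algebra_simps)
qed

lemma i4lo: fixes s U Y :: real assumes "s > 0" "U > 0" "Y \<ge> 0"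
  shows "0 \<le> (2 * s * (2 * s + 1) * (2 * s + 2) * (2 * s + 3) * U\<^sup>2 - 24 * s * (s + 1) * (2 * s + 3) * U * Y
     + 12 * s * (s + 1) * Y\<^sup>2) * U\<^sup>2 + 2 * s * (s + 1) * (2 * s + 2) * 3 * (U + Y) ^ 4"
proof -
  define k where "k = 4 * s * (s + 1)"
  have k: "k > 0" using assms by (simp add: k_def)
  have q: "0 \<le> (2 * s+1) * (2 * s+3) * U\<^sup>2 - 6 * (2 * s+3) * U * Y + 3 * Y\<^sup>2 + 3 * (s+1) * (U\<^sup>2 + 4 * U * Y + 6 * Y\<^sup>2)"
    (is "0 \<le> ?Q")
  proof -
    define c where "c = 21 + 18 * s"
    define K where "K = (2 * s+1) * (2 * s+3) + 3 * (s+1)"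
    have c: "c > 0" using assms by (simp add: c_def)
    have "0 \<le> s * s" by simp
    hence "9 \<le> c * K" unfolding c_def K_def using assms by (simp add: algebra_simps)
    hence "0 \<le> (c * Y - 3 * U)\<^sup>2 + U\<^sup>2 * (c * K - 9)" by simp
    moreover have "(c * Y - 3 * U)\<^sup>2 + U\<^sup>2 * (c * K - 9) = c * ?Q"
      unfolding c_def K_def by (simp add: power2_eq_square algebra_simps)
    ultimately have "0 \<le> c * ?Q" by simp
    thus ?thesis using c by (simp add: zero_le_mult_iff)
  qed
  have "0 \<le> k * U\<^sup>2 * ((2 * s+1) * (2 * s+3) * U\<^sup>2 - 6 * (2 * s+3) * U * Y + 3 * Y\<^sup>2 + 3 * (s+1) * (U\<^sup>2 + 4 * U * Y + 6 * Y\<^sup>2))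
      + k * 3 * (s + 1) * (4 * U * Y ^ 3 + Y ^ 4)" (is "0 \<le> ?E")
  proof (rule add_nonneg_nonneg)
    show "0 \<le> k * U\<^sup>2 * ((2 * s+1) * (2 * s+3) * U\<^sup>2 - 6 * (2 * s+3) * U * Y + 3 * Y\<^sup>2 + 3 * (s+1) * (U\<^sup>2 + 4 * U * Y + 6 * Y\<^sup>2))"
      using q k by (intro mult_nonneg_nonneg) auto
    show "0 \<le> k * 3 * (s + 1) * (4 * U * Y ^ 3 + Y ^ 4)"
      using k assms by (intro mult_nonneg_nonneg) auto
  qed
  moreover have "?E = (2 * s * (2 * s + 1) * (2 * s + 2) * (2 * s + 3) * U\<^sup>2 - 24 * s * (s + 1) * (2 * s + 3) * U * Y
     + 12 * s * (s + 1) * Y\<^sup>2) * U\<^sup>2 + 2 * s * (s + 1) * (2 * s + 2) * 3 * (U + Y) ^ 4"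
    unfolding k_def by (simp add: power2_eq_square power3_eq_cube power4_eq_xxxx algebra_simps)
  ultimately show ?thesis by simp
qed


theorem lemma5p6:
  fixes \<gamma> s u v :: real
  assumes "\<gamma> > 0" and "s > 0" and "u \<ge> \<gamma>"
  shows "(\<forall>j\<ge>1. D1G j u v s / G u v s = P j u v s / (u\<^sup>2 + v\<^sup>2) ^ j)
    \<and> - 2 * s / \<gamma> \<le> D1G 1 u v s / G u v s \<and> D1G 1 u v s / G u v s < 0
    \<and> - s / (4 * \<gamma>\<^sup>2 * (s + 1)) \<le> D1G 2 u v s / G u v s
    \<and> D1G 2 u v s / G u v s \<le> 2 * s * (2 * s + 1) / \<gamma>\<^sup>2
    \<and> - 2 * s * (2 * s + 1) * (2 * s + 2) / \<gamma> ^ 3 \<le> D1G 3 u v s / G u v s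
    \<and> D1G 3 u v s / G u v s \<le> 2 * s * (2 * s + 2) / (\<gamma> ^ 3 * (s + 2)\<^sup>2)
    \<and> - 2 * s * (s + 1) * (2 * s + 2) * 3 / \<gamma> ^ 4 \<le> D1G 4 u v s / G u v s
    \<and> D1G 4 u v s / G u v s \<le> 2 * s * (2 * s + 1) * (2 * s + 2) * (2 * s + 3) / \<gamma> ^ 4"
proof -
  have g: "\<gamma> > 0" "s > 0" "u \<ge> \<gamma>" by fact+
  have u: "u > 0" using g by simp
  define U where "U = u\<^sup>2"
  define Y where "Y = v\<^sup>2"
  have U: "U > 0" using u by (simp add: U_def)
  have Y: "Y \<ge> 0" by (simp add: Y_def)
  have rU: "u\<^sup>2 + v\<^sup>2 = U + Y" by (simp add: U_def Y_def)
  have r: "U + Y > 0" using U Y by simp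
  have gU: "\<gamma>\<^sup>2 \<le> U" unfolding U_def using g by (intro power_mono) auto
  have gpos: "0 < \<gamma>\<^sup>2" using g by simp
  have R: "D1G j u v s / G u v s = P j u v s / (u\<^sup>2 + v\<^sup>2) ^ j" for j
  proof -
    have "D1G j u v s = (U + Y) powr (-s - real j) * P j u v s"
      using D_formula[of v j s] r unfolding D1G_def rU[symmetric] by auto
    moreover have "(U + Y) powr (-s - real j) = (U + Y) powr (-s) / (U + Y) ^ j"
      using r by (simp add: powr_diff powr_realpow)
    moreover have "G u v s = (U + Y) powr (-s)" by (simp add: G_def rU)
    moreover have "(U + Y) powr (-s) > 0" using r by simp
    ultimately show ?thesis unfolding rU by simp
  qed
  have R1: "D1G 1 u v s / G u v s = - 2 * s * u / (U + Y)" using R[of 1] by (simp add: rU)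
  have R2: "D1G 2 u v s / G u v s = ((4 * s\<^sup>2 + 2 * s) * U - 2 * s * Y) / (U + Y)\<^sup>2"
  proof -
    have "P 2 u v s = (4 * s\<^sup>2 + 2 * s) * U - 2 * s * Y" by (simp add: P2 U_def Y_def)
    thus ?thesis using R[of 2] by (simp only: rU)
  qed
  have R3: "D1G 3 u v s / G u v s = u * (12 * s * (s + 1) * Y - 2 * s * (2 * s + 1) * (2 * s + 2) * U) / (U + Y) ^ 3"
  proof -
    have "P 3 u v s = u * (12 * s * (s + 1) * Y - 2 * s * (2 * s + 1) * (2 * s + 2) * U)"
      by (simp add: P3 U_def Y_def power2_eq_square power3_eq_cube algebra_simps)
    thus ?thesis using R[of 3] by (simp only: rU)
  qed
  have R4: "D1G 4 u v s / G u v s = (2 * s * (2 * s + 1) * (2 * s + 2) * (2 * s + 3) * U\<^sup>2 - 24 * s * (s + 1) * (2 * s + 3) * U * Y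
     + 12 * s * (s + 1) * Y\<^sup>2) / (U + Y) ^ 4"
  proof -
    have "P 4 u v s = 2 * s * (2 * s + 1) * (2 * s + 2) * (2 * s + 3) * U\<^sup>2 - 24 * s * (s + 1) * (2 * s + 3) * U * Y
     + 12 * s * (s + 1) * Y\<^sup>2"
      by (simp add: P4 U_def Y_def power2_eq_square power4_eq_xxxx algebra_simps)
    thus ?thesis using R[of 4] by (simp only: rU)
  qed
  have c1: "- 2 * s / \<gamma> \<le> D1G 1 u v s / G u v s"
  proof -
    have "\<gamma> * u \<le> U + Y" using g Y unfolding U_def power2_eq_square
      by (smt (verit) mult_right_mono u)
    hence "u * \<gamma> \<le> U + Y" by (simp add: mult.commute)
    thus ?thesis unfolding R1 using g r by (simp add: divide_simps)
  qed
  have c2: "D1G 1 u v s / G u v s < 0" unfolding R1 using g u r by (simp add: divide_simps)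
  have c3: "- s / (4 * \<gamma>\<^sup>2 * (s + 1)) \<le> D1G 2 u v s / G u v s"
  proof -
    have "- s / (4 * \<gamma>\<^sup>2 * (s + 1)) \<le> - s / (4 * U * (s + 1))"
      using g gU gpos U by (simp add: divide_simps mult_left_mono)
    thus ?thesis unfolding R2 using i2lo[OF g(2) U Y] by linarith
  qed
  have c4: "D1G 2 u v s / G u v s \<le> 2 * s * (2 * s + 1) / \<gamma>\<^sup>2"
  proof -
    have "(4 * s\<^sup>2 + 2 * s) / U \<le> 2 * s * (2 * s + 1) / \<gamma>\<^sup>2"
    proof -
      have "(4 * s\<^sup>2 + 2 * s) / U \<le> (4 * s\<^sup>2 + 2 * s) / \<gamma>\<^sup>2"
        using g gU gpos U by (intro divide_left_mono) auto
      thus ?thesis by (simp add: power2_eq_square algebra_simps)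
    qed
    thus ?thesis unfolding R2 using i2hi[OF g(2) U Y] by linarith
  qed
  define a where "a = 2 * s * (2 * s + 1) * (2 * s + 2)"
  have a: "a > 0" using g by (simp add: a_def)
  have u3: "\<gamma> ^ 3 \<le> u ^ 3" using g by (intro power_mono) auto
  have c5: "- 2 * s * (2 * s + 1) * (2 * s + 2) / \<gamma> ^ 3 \<le> D1G 3 u v s / G u v s"
  proof -
    have "- a / \<gamma> ^ 3 \<le> - a / u ^ 3" using g u3 a by (simp add: divide_simps mult_left_mono)
    also have "- a / u ^ 3 \<le> - a * u ^ 3 / (U + Y) ^ 3"
    proof -
      have "U ^ 3 \<le> (U + Y) ^ 3" using U Y by (intro power_mono) auto
      moreover have "u ^ 3 * u ^ 3 = U ^ 3" by (simp add: U_def power2_eq_square power3_eq_cube)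
      ultimately have "a * (u ^ 3 * u ^ 3) \<le> a * (U + Y) ^ 3" using a
        by (intro mult_left_mono) auto
      thus ?thesis using u r by (simp add: divide_simps mult.assoc)
    qed
    also have "- a * u ^ 3 / (U + Y) ^ 3 \<le> u * (12 * s * (s + 1) * Y - a * U) / (U + Y) ^ 3"
    proof (rule divide_right_mono)
      have "0 \<le> u * (12 * s * (s + 1) * Y)" using u g Y by simp
      thus "- a * u ^ 3 \<le> u * (12 * s * (s + 1) * Y - a * U)"
        by (simp add: U_def power2_eq_square power3_eq_cube algebra_simps)
    qed (use r in simp)
    finally show ?thesis unfolding R3 a_def by simp
  qed
  have c6: "D1G 3 u v s / G u v s \<le> 2 * s * (2 * s + 2) / (\<gamma> ^ 3 * (s + 2)\<^sup>2)"
  proof -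
    have "u * (12 * s * (s + 1) * Y - a * U) / (U + Y) ^ 3 \<le> 2 * s * (2 * s + 2) / (u ^ 3 * (s + 2)\<^sup>2)"
    proof -
      have "U\<^sup>2 * (12 * s * (s + 1) * Y - a * U) * (s + 2)\<^sup>2 \<le> 2 * s * (2 * s + 2) * (U + Y) ^ 3"
        using i3hi[OF g(2) U Y] by (simp add: a_def)
      moreover have "U\<^sup>2 = u * u ^ 3" by (simp add: U_def power2_eq_square power3_eq_cube)
      ultimately have "u * (12 * s * (s + 1) * Y - a * U) * (u ^ 3 * (s + 2)\<^sup>2) \<le> 2 * s * (2 * s + 2) * (U + Y) ^ 3"
        by (simp add: algebra_simps)
      thus ?thesis using u r g by (simp add: divide_simps)
    qed
    also have "\<dots> \<le> 2 * s * (2 * s + 2) / (\<gamma> ^ 3 * (s + 2)\<^sup>2)"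
      using g u3 by (intro divide_left_mono mult_right_mono mult_pos_pos) auto
    finally show ?thesis unfolding R3 a_def by simp
  qed
  have U2: "\<gamma> ^ 4 \<le> U\<^sup>2" using gU gpos
    by (metis power2_eq_square power_mono less_imp_le power4_eq_xxxx mult.assoc)
  have g4: "\<gamma> ^ 4 > 0" using g by simp
  have c7: "- 2 * s * (s + 1) * (2 * s + 2) * 3 / \<gamma> ^ 4 \<le> D1G 4 u v s / G u v s"
  proof -
    define L where "L = 2 * s * (s + 1) * (2 * s + 2) * 3"
    have L: "L > 0" using g by (simp add: L_def)
    have "- L / \<gamma> ^ 4 \<le> - L / U\<^sup>2" using U2 g4 L by (simp add: divide_simps mult_left_mono)
    also have "\<dots> \<le> D1G 4 u v s / G u v s"
      unfolding R4 using i4lo[OF g(2) U Y] U r by (simp add: divide_simps L_def algebra_simps)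
    finally show ?thesis by (simp add: L_def)
  qed
  have c8: "D1G 4 u v s / G u v s \<le> 2 * s * (2 * s + 1) * (2 * s + 2) * (2 * s + 3) / \<gamma> ^ 4"
  proof -
    define A where "A = 2 * s * (2 * s + 1) * (2 * s + 2) * (2 * s + 3)"
    have A: "A > 0" using g by (simp add: A_def)
    have "D1G 4 u v s / G u v s \<le> A / U\<^sup>2"
      unfolding R4 using i4hi[OF g(2) U Y] U r by (simp add: divide_simps A_def algebra_simps)
    also have "A / U\<^sup>2 \<le> A / \<gamma> ^ 4" using U2 g4 A U by (intro divide_left_mono) auto
    finally show ?thesis by (simp add: A_def)
  qed
  show ?thesis using R c1 c2 c3 c4 c5 c6 c7 c8 by blast
qed

end
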